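(* Let $G$ be a nontrivial graph of order $n$, not isomorphic to $K_n$, such that $\beta_p(G)=n-h$ and $\tau(G)=\tau>\frac{n}{2}$. Let $W$ be its $\tau$-set. Then $n-2h\le\tau\le n-h-1$ if and only if $G[W]\cong K_\tau$.
   Context: All graphs are finite, simple, undirected and connected. Two vertices $u,v$ are twins if $N(u)\setminus\{v\}=N(v)\setminus\{u\}$; the twin number $\tau(G)$ is the maximum cardinality of an equivalence class of the twin relation; a $\tau$-set is a set of pairwise twin vertices of cardinality $\tau(G)$. For a partition $\Pi=\{S_1,\dots,S_k\}$ of $V(G)$, $r(u|\Pi)=(d(u,S_1),\dots,d(u,S_k))$ with $d(u,S)=\min_{w\in S}d(u,w)$; $\Pi$ is locating if $r(u|\Pi)\ne r(v|\Pi)$ for all distinct $u,v$; $\beta_p(G)$ is the minimum size of a locating partition. *)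

theory Defs
  imports Main
begin

fun reach :: "('a \<Rightarrow> 'a \<Rightarrow> bool) \<Rightarrow> nat \<Rightarrow> 'a \<Rightarrow> 'a \<Rightarrow> bool" where
  "reach E 0 u v = (u = v)"
| "reach E (Suc k) u v = (\<exists>w. E u w \<and> reach E k w v)"

definition graph :: "'a set \<Rightarrow> ('a \<Rightarrow> 'a \<Rightarrow> bool) \<Rightarrow> bool" where
  "graph V E \<longleftrightarrow> finite V \<and> V \<noteq> {}
     \<and> (\<forall>u v. E u v \<longrightarrow> u \<in> V \<and> v \<in> V)
     \<and> (\<forall>u v. E u v \<longrightarrow> E v u)
     \<and> (\<forall>u. \<not> E u u)"

definition connected_graph :: "'a set \<Rightarrow> ('a \<Rightarrow> 'a \<Rightarrow> bool) \<Rightarrow> bool" where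
  "connected_graph V E \<longleftrightarrow> graph V E \<and> (\<forall>u\<in>V. \<forall>v\<in>V. \<exists>k. reach E k u v)"

definition gdist :: "('a \<Rightarrow> 'a \<Rightarrow> bool) \<Rightarrow> 'a \<Rightarrow> 'a \<Rightarrow> nat" where
  "gdist E u v = (LEAST k. reach E k u v)"

definition set_dist :: "('a \<Rightarrow> 'a \<Rightarrow> bool) \<Rightarrow> 'a \<Rightarrow> 'a set \<Rightarrow> nat" where
  "set_dist E u S = Min ((gdist E u) ` S)"

definition nbhd :: "'a set \<Rightarrow> ('a \<Rightarrow> 'a \<Rightarrow> bool) \<Rightarrow> 'a \<Rightarrow> 'a set" where
  "nbhd V E u = {w \<in> V. E u w}"

definition twins :: "'a set \<Rightarrow> ('a \<Rightarrow> 'a \<Rightarrow> bool) \<Rightarrow> 'a \<Rightarrow> 'a \<Rightarrow> bool" where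
  "twins V E u v \<longleftrightarrow> nbhd V E u - {v} = nbhd V E v - {u}"

definition twin_class :: "'a set \<Rightarrow> ('a \<Rightarrow> 'a \<Rightarrow> bool) \<Rightarrow> 'a \<Rightarrow> 'a set" where
  "twin_class V E u = {v \<in> V. twins V E u v}"

definition twin_number :: "'a set \<Rightarrow> ('a \<Rightarrow> 'a \<Rightarrow> bool) \<Rightarrow> nat" where
  "twin_number V E = Max ((\<lambda>u. card (twin_class V E u)) ` V)"

definition tau_set :: "'a set \<Rightarrow> ('a \<Rightarrow> 'a \<Rightarrow> bool) \<Rightarrow> 'a set \<Rightarrow> bool" where
  "tau_set V E W \<longleftrightarrow> W \<subseteq> V \<and> (\<forall>u\<in>W. \<forall>v\<in>W. twins V E u v)
      \<and> card W = twin_number V E"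

definition is_partition :: "'a set \<Rightarrow> 'a set set \<Rightarrow> bool" where
  "is_partition V P \<longleftrightarrow> (\<Union>P = V) \<and> {} \<notin> P
      \<and> (\<forall>A\<in>P. \<forall>B\<in>P. A \<noteq> B \<longrightarrow> A \<inter> B = {})"

text \<open>r(u|P) \<noteq> r(v|P) means some coordinate d(.,S) differs.\<close>
definition locating_partition :: "'a set \<Rightarrow> ('a \<Rightarrow> 'a \<Rightarrow> bool) \<Rightarrow> 'a set set \<Rightarrow> bool" where
  "locating_partition V E P \<longleftrightarrow> is_partition V P \<and>
     (\<forall>u\<in>V. \<forall>v\<in>V. u \<noteq> v \<longrightarrow> (\<exists>S\<in>P. set_dist E u S \<noteq> set_dist E v S))"

definition partition_dimension :: "'a set \<Rightarrow> ('a \<Rightarrow> 'a \<Rightarrow> bool) \<Rightarrow> nat" where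
  "partition_dimension V E = (LEAST k. \<exists>P. locating_partition V E P \<and> card P = k)"

definition complete_on :: "('a \<Rightarrow> 'a \<Rightarrow> bool) \<Rightarrow> 'a set \<Rightarrow> bool" where
  "complete_on E W \<longleftrightarrow> (\<forall>u\<in>W. \<forall>v\<in>W. u \<noteq> v \<longrightarrow> E u v)"

end

theory Submission
  imports Defs
begin

locale cg =
  fixes V :: "'a set" and E :: "'a \<Rightarrow> 'a \<Rightarrow> bool"
  assumes cg: "connected_graph V E"
begin

lemma finV: "finite V" using cg unfolding connected_graph_def graph_def by blast
lemma edgeV: "E u v \<Longrightarrow> u \<in> V \<and> v \<in> V" using cg unfolding connected_graph_def graph_def by blast
lemma esym: "E u v \<Longrightarrow> E v u" using cg unfolding connected_graph_def graph_def by blast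
lemma irr: "\<not> E u u" using cg unfolding connected_graph_def graph_def by blast
lemma conn: "u \<in> V \<Longrightarrow> v \<in> V \<Longrightarrow> \<exists>k. reach E k u v" using cg unfolding connected_graph_def by blast

lemma gdist_reach: "u \<in> V \<Longrightarrow> v \<in> V \<Longrightarrow> reach E (gdist E u v) u v"
  unfolding gdist_def using conn by (meson LeastI_ex)

lemma gdist_le: "reach E k u v \<Longrightarrow> gdist E u v \<le> k"
  unfolding gdist_def by (rule Least_le)

lemma gdist0: "u \<in> V \<Longrightarrow> v \<in> V \<Longrightarrow> gdist E u v = 0 \<longleftrightarrow> u = v"
proof
  assume "u \<in> V" "v \<in> V" "gdist E u v = 0"
  then show "u = v" using gdist_reach[of u v] by simp
next
  assume "u = v" then show "gdist E u v = 0" using gdist_le[of 0 u v] by simp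
qed

lemma gdist1: "u \<in> V \<Longrightarrow> v \<in> V \<Longrightarrow> gdist E u v = 1 \<longleftrightarrow> E u v"
proof
  assume a: "u \<in> V" "v \<in> V" "gdist E u v = 1"
  then show "E u v" using gdist_reach[of u v] by simp
next
  assume a: "u \<in> V" "v \<in> V" "E u v"
  then have "reach E 1 u v" by simp
  then have "gdist E u v \<le> 1" by (rule gdist_le)
  moreover have "u \<noteq> v" using a irr by blast
  ultimately show "gdist E u v = 1" using gdist0[OF a(1,2)] by linarith
qed

lemma sd0:
  assumes "x \<in> V" "T \<subseteq> V" "T \<noteq> {}"
  shows "set_dist E x T = 0 \<longleftrightarrow> x \<in> T"
proof -
  have fin: "finite T" using assms finV finite_subset by blast
  show ?thesis
  proof
    assume "set_dist E x T = 0"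
    then have "0 \<in> gdist E x ` T" unfolding set_dist_def using Min_in[of "gdist E x ` T"] fin assms by force
    then show "x \<in> T" using gdist0 assms by fastforce
  next
    assume "x \<in> T"
    then have "gdist E x x = 0" using gdist0 assms by blast
    then show "set_dist E x T = 0" unfolding set_dist_def using Min_le[of "gdist E x ` T" 0] fin \<open>x \<in> T\<close>
      by (metis image_eqI finite_imageI le_zero_eq)
  qed
qed

lemma sd1:
  assumes "x \<in> V" "T \<subseteq> V" "T \<noteq> {}" "x \<notin> T"
  shows "set_dist E x T = 1 \<longleftrightarrow> (\<exists>t\<in>T. E x t)"
proof -
  have fin: "finite T" using assms finV finite_subset by blast
  show ?thesis
  proof
    assume "set_dist E x T = 1"
    then have "1 \<in> gdist E x ` T" unfolding set_dist_def using Min_in[of "gdist E x ` T"] fin assms by force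
    then show "\<exists>t\<in>T. E x t" using gdist1 assms by fastforce
  next
    assume "\<exists>t\<in>T. E x t"
    then obtain t where t: "t \<in> T" "E x t" by blast
    then have "gdist E x t = 1" using gdist1 assms by blast
    then have "set_dist E x T \<le> 1" unfolding set_dist_def using Min_le[of "gdist E x ` T"] fin t
      by (metis image_eqI finite_imageI)
    moreover have "set_dist E x T \<noteq> 0" using sd0 assms by blast
    ultimately show "set_dist E x T = 1" by linarith
  qed
qed

lemma twin_gdist:
  assumes tw: "twins V E a b" and "a \<in> V" "b \<in> V" "x \<in> V" "x \<noteq> a" "x \<noteq> b"
  shows "gdist E b x \<le> gdist E a x"
proof -
  have r: "reach E (gdist E a x) a x" using gdist_reach assms by blast
  show ?thesis
  proof (cases "gdist E a x")
    case 0 then show ?thesis using r assms by simp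
  next
    case (Suc k)
    with r obtain w where w: "E a w" "reach E k w x" by auto
    show ?thesis
    proof (cases "w = b")
      case True then show ?thesis using w Suc gdist_le[of k b x] by simp
    next
      case False
      then have "w \<in> nbhd V E a - {b}" using w edgeV unfolding nbhd_def by auto
      then have "w \<in> nbhd V E b" using tw unfolding twins_def by blast
      then have "E b w" unfolding nbhd_def by simp
      then have "reach E (Suc k) b x" using w by auto
      then show ?thesis using Suc gdist_le by simp
    qed
  qed
qed

lemma twins_sym: "twins V E a b \<Longrightarrow> twins V E b a" unfolding twins_def by simp

lemma twin_gdist_eq:
  assumes tw: "twins V E a b" and "a \<in> V" "b \<in> V" "x \<in> V" "x \<noteq> a" "x \<noteq> b"
  shows "gdist E a x = gdist E b x"
  using twin_gdist[OF tw] twin_gdist[OF twins_sym[OF tw]] assms by (meson antisym)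

end

locale tw = cg +
  fixes W
  assumes WV: "W \<subseteq> V"
    and Wtw: "\<forall>u\<in>W. \<forall>v\<in>W. twins V E u v"
    and Wmax: "\<forall>x\<in>V. card (twin_class V E x) \<le> card W"
begin

lemma unif:
  assumes "x \<in> V - W" "w \<in> W" "w' \<in> W" "E x w" shows "E x w'"
proof (cases "w = w'")
  case False
  have "x \<in> nbhd V E w - {w'}" using assms esym unfolding nbhd_def by auto
  then have "x \<in> nbhd V E w'" using Wtw assms unfolding twins_def by blast
  then show ?thesis using esym unfolding nbhd_def by auto
qed (use assms in auto)

lemma Wtri:
  assumes "a \<in> W" "b \<in> W" "c \<in> W" "E a b" "c \<noteq> a" "c \<noteq> b" shows "E c b"
proof -
  have "b \<in> nbhd V E a - {c}" using assms edgeV unfolding nbhd_def by auto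
  then have "b \<in> nbhd V E c" using Wtw assms unfolding twins_def by blast
  then show ?thesis unfolding nbhd_def by auto
qed

lemma clique_or_indep: "complete_on E W \<or> (\<forall>a\<in>W. \<forall>b\<in>W. \<not> E a b)"
proof (cases "\<exists>a\<in>W. \<exists>b\<in>W. E a b")
  case True
  then obtain a b where ab: "a \<in> W" "b \<in> W" "E a b" by blast
  then have "a \<noteq> b" using irr by blast
  have xb: "E x b" if "x \<in> W" "x \<noteq> b" for x
    using Wtri[OF ab(1,2) that(1) ab(3)] ab that by (cases "x = a") auto
  have "complete_on E W" unfolding complete_on_def
  proof (intro ballI impI)
    fix x y assume xy: "x \<in> W" "y \<in> W" "x \<noteq> y"
    show "E x y"
    proof (cases "x = b")
      case True then show ?thesis using xb[of y] xy esym by auto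
    next
      case False
      then have "E x b" using xb xy by blast
      show ?thesis
      proof (cases "y = b")
        case True then show ?thesis using \<open>E x b\<close> by simp
      next
        case False
        have "E y x" using Wtri[of b x y] esym[OF \<open>E x b\<close>] xy ab False by blast
        then show ?thesis using esym by blast
      qed
    qed
  qed
  then show ?thesis by blast
qed auto

lemma no_twin:
  assumes "u \<in> V - W" "w \<in> W" "twins V E w u" shows False
proof -
  have "insert u W \<subseteq> twin_class V E w" using assms Wtw WV unfolding twin_class_def by auto
  moreover have "finite (twin_class V E w)" using finV unfolding twin_class_def by auto
  ultimately have "card (insert u W) \<le> card (twin_class V E w)" by (simp add: card_mono)
  moreover have "finite W" using WV finV finite_subset by blast
  ultimately have "card W + 1 \<le> card (twin_class V E w)" using assms by simp
  then show False using Wmax assms WV by force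
qed


lemma part_facts:
  assumes P: "is_partition V P"
  shows "\<And>T. T \<in> P \<Longrightarrow> T \<subseteq> V \<and> T \<noteq> {}"
    and "finite P"
    and "\<And>x. x \<in> V \<Longrightarrow> \<exists>S\<in>P. x \<in> S"
    and "\<And>S T x. S \<in> P \<Longrightarrow> T \<in> P \<Longrightarrow> x \<in> S \<Longrightarrow> x \<in> T \<Longrightarrow> S = T"
proof -
  show "\<And>T. T \<in> P \<Longrightarrow> T \<subseteq> V \<and> T \<noteq> {}" using P unfolding is_partition_def by blast
  have "P \<subseteq> Pow V" using P unfolding is_partition_def by blast
  then show "finite P" using finV by (meson finite_Pow_iff finite_subset)
  show "\<And>x. x \<in> V \<Longrightarrow> \<exists>S\<in>P. x \<in> S" using P unfolding is_partition_def by blast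
  show "\<And>S T x. S \<in> P \<Longrightarrow> T \<in> P \<Longrightarrow> x \<in> S \<Longrightarrow> x \<in> T \<Longrightarrow> S = T"
    using P unfolding is_partition_def by blast
qed

lemma lower:
  assumes L: "locating_partition V E P"
  shows "card W \<le> card P"
    and "complete_on E W \<Longrightarrow> x \<in> V - W \<Longrightarrow> w0 \<in> W \<Longrightarrow> E x w0 \<Longrightarrow> card W < card P"
proof -
  have P: "is_partition V P" using L unfolding locating_partition_def by blast
  note pf = part_facts[OF P]
  define cls where "cls w = (SOME S. S \<in> P \<and> w \<in> S)" for w
  have cls: "cls w \<in> P \<and> w \<in> cls w" if "w \<in> V" for w
    unfolding cls_def using pf(3)[OF that] by (metis (mono_tags, lifting) someI_ex)
  have inj: "inj_on cls W"
  proof (rule inj_onI, rule ccontr)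
    fix a b assume ab: "a \<in> W" "b \<in> W" "cls a = cls b" "a \<noteq> b"
    have aV: "a \<in> V" "b \<in> V" using ab WV by auto
    obtain T where T: "T \<in> P" "set_dist E a T \<noteq> set_dist E b T"
      using L ab aV unfolding locating_partition_def by blast
    have TV: "T \<subseteq> V" "T \<noteq> {}" using pf(1)[OF T(1)] by auto
    show False
    proof (cases "a \<in> T \<or> b \<in> T")
      case True
      then have "a \<in> T \<and> b \<in> T" using cls[OF aV(1)] cls[OF aV(2)] ab(3) pf(4) T(1) by metis
      then show False using sd0 TV aV T(2) by metis
    next
      case False
      have "gdist E a ` T = gdist E b ` T"
        by (rule image_cong, simp, rule twin_gdist_eq) (use Wtw ab aV TV False in auto)
      then show False using T(2) unfolding set_dist_def by simp
    qed
  qed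
  moreover have "cls ` W \<subseteq> P" using cls WV by auto
  ultimately show le: "card W \<le> card P" using pf(2) card_inj_on_le by blast
  assume cl: "complete_on E W" and x: "x \<in> V - W" "w0 \<in> W" "E x w0"
  show "card W < card P"
  proof (rule ccontr)
    assume "\<not> card W < card P"
    then have "card P \<le> card (cls ` W)" using le card_image[OF inj] by simp
    then have eq: "cls ` W = P" using card_seteq[OF pf(2) \<open>cls ` W \<subseteq> P\<close>] by blast
    obtain S where S: "S \<in> P" "x \<in> S" using pf(3) x by blast
    then obtain wi where wi: "wi \<in> W" "S = cls wi" using eq by blast
    have wiV: "wi \<in> V" using wi WV by auto
    have xV: "x \<in> V" using x by auto
    have "x \<noteq> wi" using x wi by auto
    then obtain T where T: "T \<in> P" "set_dist E x T \<noteq> set_dist E wi T"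
      using L xV wiV unfolding locating_partition_def by blast
    have TV: "T \<subseteq> V" "T \<noteq> {}" using pf(1)[OF T(1)] by auto
    show False
    proof (cases "T = S")
      case True
      then show False using sd0 TV xV wiV T(2) S cls[OF wiV] wi by metis
    next
      case False
      obtain wj where wj: "wj \<in> W" "T = cls wj" using eq T by blast
      have wjV: "wj \<in> V" using wj WV by auto
      have "wj \<in> T" using cls[OF wjV] wj by simp
      have "wi \<noteq> wj" using False wi wj by auto
      have xn: "x \<notin> T" using S T pf(4) False by blast
      have wn: "wi \<notin> T" using cls[OF wiV] wi S T pf(4) False by blast
      have "E x wj" using unif[OF x(1,2) wj(1) x(3)] .
      moreover have "E wi wj" using cl wi wj \<open>wi \<noteq> wj\<close> unfolding complete_on_def by blast
      ultimately have "set_dist E x T = 1" "set_dist E wi T = 1"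
        using sd1[OF xV TV xn] sd1[OF wiV TV wn] \<open>wj \<in> T\<close> by blast+
      then show False using T(2) by simp
    qed
  qed
qed


definition clf :: "'a set \<Rightarrow> ('a \<Rightarrow> 'a) \<Rightarrow> 'a \<Rightarrow> 'a set" where
  "clf A f x = (if x \<in> A then {f x, x} else if x \<in> f ` A then {x, inv_into A f x} else {x})"

lemma construct:
  assumes Z: "Z \<subseteq> V - W" and inj: "inj_on f (V - W - Z)" and fW: "f ` (V - W - Z) \<subseteq> W"
    and sep: "\<forall>u \<in> V - W - Z. \<exists>T \<in> clf (V - W - Z) f ` V. u \<notin> T \<and> f u \<notin> T
               \<and> ((\<exists>t\<in>T. E u t) \<noteq> (\<exists>t\<in>T. E (f u) t))"
  shows "locating_partition V E (clf (V - W - Z) f ` V)"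
    and "card (clf (V - W - Z) f ` V) \<le> card Z + card W"
proof -
  define A where "A = V - W - Z"
  define c where "c = clf A f"
  have AV: "A \<subseteq> V" "A \<inter> W = {}" unfolding A_def by auto
  have fA: "f ` A \<subseteq> W" using fW A_def by simp
  have injA: "inj_on f A" using inj A_def by simp
  have c1: "x \<in> c x \<and> c x \<subseteq> V" if "x \<in> V" for x
    using that fA WV inv_into_into[of x f A] AV unfolding c_def clf_def by auto
  have c2: "c y = c x" if "x \<in> V" "y \<in> c x" for x y
  proof (cases "x \<in> A")
    case True
    then have "f x \<notin> A" using fA AV by auto
    have iv: "inv_into A f (f x) = x" using inv_into_f_f[OF injA True] .
    have cx: "c x = {f x, x}" using True unfolding c_def clf_def by simp
    have cfx: "c (f x) = {f x, x}" using \<open>f x \<notin> A\<close> True iv unfolding c_def clf_def by simp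
    have "y = f x \<or> y = x" using that(2) cx by simp
    then show ?thesis using cx cfx by auto
  next
    case False
    show ?thesis
    proof (cases "x \<in> f ` A")
      case True
      define a where "a = inv_into A f x"
      have a: "a \<in> A" "f a = x" unfolding a_def using True by (auto simp: inv_into_into f_inv_into_f)
      have "y = x \<or> y = a" using that False True unfolding c_def clf_def a_def by auto
      moreover have "c x = {x, a}" using False True unfolding c_def clf_def a_def by simp
      moreover have "c a = {x, a}" using a unfolding c_def clf_def by auto
      ultimately show ?thesis by auto
    next
      case False2: False
      then show ?thesis using that False unfolding c_def clf_def by auto
    qed
  qed
  have c3: "\<exists>u\<in>A. (x = f u \<and> y = u) \<or> (x = u \<and> y = f u)"
    if "x \<in> V" "y \<in> V" "x \<noteq> y" "c x = c y" for x y
  proof -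
    have "y \<in> c x" using c1 that by metis
    then show ?thesis using that unfolding c_def clf_def
      by (auto split: if_splits simp: f_inv_into_f inv_into_into)
  qed
  have part: "is_partition V (c ` V)"
    unfolding is_partition_def
  proof (intro conjI ballI impI)
    show "\<Union> (c ` V) = V" using c1 by blast
    show "{} \<notin> c ` V" using c1 by blast
    fix S T assume ST: "S \<in> c ` V" "T \<in> c ` V" "S \<noteq> T"
    show "S \<inter> T = {}"
    proof (rule ccontr)
      assume "S \<inter> T \<noteq> {}"
      then obtain t where "t \<in> S" "t \<in> T" by blast
      then show False using ST c2 by blast
    qed
  qed
  have sdiff: "set_dist E x T \<noteq> set_dist E y T"
    if "x \<in> V" "y \<in> V" "T \<in> c ` V" "x \<notin> T" "y \<notin> T" "(\<exists>t\<in>T. E x t) \<noteq> (\<exists>t\<in>T. E y t)" for x y T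
  proof -
    have TV: "T \<subseteq> V" "T \<noteq> {}" using that(3) c1 by auto
    show ?thesis using sd1[OF that(1) TV that(4)] sd1[OF that(2) TV that(5)] that(6) by auto
  qed
  show "locating_partition V E (clf (V - W - Z) f ` V)"
    unfolding locating_partition_def c_def[symmetric] A_def[symmetric]
  proof (intro conjI part ballI impI)
    fix x y assume xy: "x \<in> V" "y \<in> V" "x \<noteq> y"
    show "\<exists>S\<in>c ` V. set_dist E x S \<noteq> set_dist E y S"
    proof (cases "c x = c y")
      case False
      have "y \<notin> c x" using c2 xy False by metis
      then have "set_dist E x (c x) = 0" "set_dist E y (c x) \<noteq> 0"
        using sd0[OF xy(1)] sd0[OF xy(2)] c1[OF xy(1)] by blast+
      then show ?thesis using xy by force
    next
      case True
      obtain u where u: "u \<in> A" "(x = f u \<and> y = u) \<or> (x = u \<and> y = f u)" using c3[OF xy True] by blast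
      obtain T where T: "T \<in> c ` V" "u \<notin> T" "f u \<notin> T" "(\<exists>t\<in>T. E u t) \<noteq> (\<exists>t\<in>T. E (f u) t)"
        using bspec[OF sep[folded A_def c_def] u(1)] by blast
      have uV: "u \<in> V" "f u \<in> V" using u AV fA WV by auto
      have d: "set_dist E u T \<noteq> set_dist E (f u) T"
        by (rule sdiff[OF uV T(1) T(2) T(3) T(4)])
      show ?thesis
      proof (rule bexI[OF _ T(1)])
        show "set_dist E x T \<noteq> set_dist E y T" using u(2) d by (elim disjE conjE) (simp_all add: eq_commute)
      qed
    qed
  qed
  have finW: "finite W" using WV finV finite_subset by blast
  have VV: "V = Z \<union> A \<union> f ` A \<union> (W - f ` A)" using Z WV fA unfolding A_def by auto
  have cfa: "c (f a) = c a" if "a \<in> A" for a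
  proof -
    have "f a \<in> c a" using that unfolding c_def clf_def by simp
    moreover have "a \<in> V" using that AV by auto
    ultimately show ?thesis using c2 by blast
  qed
  have sub: "c ` V \<subseteq> c ` Z \<union> c ` A \<union> c ` (W - f ` A)"
  proof
    fix S assume "S \<in> c ` V"
    then obtain x where x: "x \<in> V" "S = c x" by blast
    show "S \<in> c ` Z \<union> c ` A \<union> c ` (W - f ` A)"
    proof (cases "x \<in> f ` A")
      case True
      then obtain a where "a \<in> A" "x = f a" by blast
      then have "S = c a" using cfa x by simp
      then show ?thesis using \<open>a \<in> A\<close> by blast
    next
      case False
      then have "x \<in> Z \<or> x \<in> A \<or> x \<in> W - f ` A" using VV x by blast
      then show ?thesis using x by blast
    qed
  qed
  have finZ: "finite Z" and finA: "finite A" using Z AV finV finite_subset by blast+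
  have u1: "card (c ` V) \<le> card (c ` Z \<union> c ` A \<union> c ` (W - f ` A))"
    by (rule card_mono) (use sub finZ finA finW in auto)
  have u2: "card (c ` Z \<union> c ` A \<union> c ` (W - f ` A)) \<le> card (c ` Z) + card (c ` A) + card (c ` (W - f ` A))"
    by (meson add_le_mono card_Un_le order_refl order_trans)
  have u3: "card (c ` Z) \<le> card Z" "card (c ` A) \<le> card A" "card (c ` (W - f ` A)) \<le> card (W - f ` A)"
    by (rule card_image_le, use finZ finA finW in auto)+
  have u4: "card (W - f ` A) = card W - card A"
    using card_Diff_subset[OF finite_imageI[OF finA] fA] card_image[OF injA] by simp
  have u5: "card A \<le> card W" using card_image[OF injA] card_mono[OF finW fA] by simp
  have "card (c ` V) \<le> card Z + card W" using u1 u2 u3 u4 u5 by linarith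
  then show "card (clf (V - W - Z) f ` V) \<le> card Z + card W" unfolding c_def A_def .
qed

end

context tw begin
lemma finW: "finite W" using WV finV finite_subset by blast

lemma inj_pick:
  assumes "A \<subseteq> V - W" "card A < card W"
  obtains f ws where "inj_on f A" "f ` A \<subseteq> W" "ws \<in> W" "ws \<notin> f ` A"
proof -
  have fA: "finite A" using assms finV finite_subset by blast
  obtain f where f: "f ` A \<subseteq> W" "inj_on f A" using card_le_inj[OF fA finW] assms by force
  have "card (f ` A) < card W" using card_image[OF f(2)] assms by simp
  moreover have "W \<subseteq> f ` A \<Longrightarrow> card W \<le> card (f ` A)" using card_mono fA by blast
  ultimately obtain ws where "ws \<in> W" "ws \<notin> f ` A" by force
  then show ?thesis by (rule that[OF f(2) f(1)])
qed

lemma upper_indep: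
  assumes ind: "\<forall>a\<in>W. \<forall>b\<in>W. \<not> E a b" and small: "card (V - W) < card W"
  shows "\<exists>P. locating_partition V E P \<and> card P \<le> card W"
proof -
  obtain f ws where f: "inj_on f (V - W)" "f ` (V - W) \<subseteq> W" and ws: "ws \<in> W" "ws \<notin> f ` (V - W)"
    using inj_pick[OF _ small] by blast
  have A: "V - W - {} = V - W" by simp
  let ?c = "clf (V - W) f"
  have sep: "\<forall>u \<in> V - W - {}. \<exists>T \<in> clf (V - W - {}) f ` V. u \<notin> T \<and> f u \<notin> T
               \<and> ((\<exists>t\<in>T. E u t) \<noteq> (\<exists>t\<in>T. E (f u) t))"
    unfolding A
  proof
    fix u assume u: "u \<in> V - W"
    have fu: "f u \<in> W" using f u by blast
    show "\<exists>T \<in> ?c ` V. u \<notin> T \<and> f u \<notin> T \<and> ((\<exists>t\<in>T. E u t) \<noteq> (\<exists>t\<in>T. E (f u) t))"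
    proof (cases "\<exists>w\<in>W. E u w")
      case True
      have cws: "?c ws = {ws}" using ws unfolding clf_def by auto
      have m: "?c ws \<in> ?c ` V" using ws WV by auto
      have "E u ws" using True unif u ws by blast
      moreover have "\<not> E (f u) ws" using ind fu ws by blast
      moreover have "u \<noteq> ws" "f u \<noteq> ws" using u ws f by auto
      ultimately have "u \<notin> ?c ws \<and> f u \<notin> ?c ws \<and> ((\<exists>t\<in>?c ws. E u t) \<noteq> (\<exists>t\<in>?c ws. E (f u) t))"
        using cws by simp
      then show ?thesis using m by blast
    next
      case False
      have "\<exists>v\<in>V - W. v \<noteq> u \<and> (E u v \<noteq> (\<exists>w\<in>W. E v w))"
      proof (rule ccontr)
        assume nw: "\<not> ?thesis"
        have "twins V E (f u) u" unfolding twins_def nbhd_def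
        proof (rule set_eqI, rule iffI)
          fix y assume y: "y \<in> {w \<in> V. E (f u) w} - {u}"
          then have yV: "y \<in> V" "y \<noteq> u" "E (f u) y" by auto
          have "y \<notin> W" using ind fu yV by blast
          then have "\<exists>w\<in>W. E y w" using yV fu esym by blast
          then have "E u y" using nw yV \<open>y \<notin> W\<close> by blast
          moreover have "y \<noteq> f u" using yV irr by blast
          ultimately show "y \<in> {w \<in> V. E u w} - {f u}" using yV by blast
        next
          fix y assume y: "y \<in> {w \<in> V. E u w} - {f u}"
          then have yV: "y \<in> V" "y \<noteq> f u" "E u y" by auto
          have "y \<notin> W" using False yV by blast
          have "y \<noteq> u" using yV irr by blast
          then have "\<exists>w\<in>W. E y w" using nw yV \<open>y \<notin> W\<close> by blast
          then have "E y (f u)" using unif yV \<open>y \<notin> W\<close> fu by blast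
          then show "y \<in> {w \<in> V. E (f u) w} - {u}" using yV esym \<open>y \<noteq> u\<close> by blast
        qed
        then show False using no_twin u fu by blast
      qed
      then obtain v where v: "v \<in> V - W" "v \<noteq> u" "E u v \<noteq> (\<exists>w\<in>W. E v w)" by blast
      have fv: "f v \<in> W" using f v by blast
      have cv: "?c v = {f v, v}" using v unfolding clf_def by simp
      have "f u \<noteq> f v"
      proof
        assume "f u = f v"
        then have "u = v" using inj_onD[OF f(1)] u v(1) by blast
        then show False using v(2) by simp
      qed
      moreover have "u \<noteq> f v" "f u \<noteq> v" using u v fu fv by auto
      moreover have "(\<exists>t\<in>{f v, v}. E u t) = E u v" using False fv by auto
      moreover have "(\<exists>t\<in>{f v, v}. E (f u) t) = (\<exists>w\<in>W. E v w)"
        using ind fu fv unif[OF v(1) _ fu] esym by blast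
      ultimately have "u \<notin> ?c v \<and> f u \<notin> ?c v \<and> ((\<exists>t\<in>?c v. E u t) \<noteq> (\<exists>t\<in>?c v. E (f u) t))"
        using cv v by simp
      moreover have "?c v \<in> ?c ` V" using v by auto
      ultimately show ?thesis by blast
    qed
  qed
  have "{} \<subseteq> V - W" by simp
  from construct[OF this _ _ sep] f
  show ?thesis by auto
qed

lemma cross:
  assumes "S \<subseteq> V" "x \<in> V - S" "y \<in> S"
  shows "\<exists>a\<in>V - S. \<exists>b\<in>S. E a b"
proof -
  obtain k where k: "reach E k x y" using conn assms by blast
  have "\<forall>x. reach E k x y \<longrightarrow> x \<in> V - S \<longrightarrow> (\<exists>a\<in>V - S. \<exists>b\<in>S. E a b)"
  proof (induction k)
    case 0 show ?case using assms by auto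
  next
    case (Suc k)
    show ?case
    proof (intro allI impI)
      fix x assume x: "reach E (Suc k) x y" "x \<in> V - S"
      then obtain w where w: "E x w" "reach E k w y" by auto
      show "\<exists>a\<in>V - S. \<exists>b\<in>S. E a b"
      proof (cases "w \<in> S")
        case True then show ?thesis using w x by blast
      next
        case False
        then have "w \<in> V - S" using edgeV[OF w(1)] by blast
        then show ?thesis using Suc.IH w(2) by blast
      qed
    qed
  qed
  then show ?thesis using k assms by blast
qed

lemma upper_clique:
  assumes cl: "complete_on E W" and small: "card (V - W) < card W"
  shows "\<exists>P. locating_partition V E P \<and> 2 * card P \<le> card (V - W) + 2 * card W"
proof -
  define H where "H u z \<longleftrightarrow> z \<in> V - W \<and> z \<noteq> u \<and> (E u z \<noteq> (\<exists>w\<in>W. E z w))" for u z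
  define U1 where "U1 = {u \<in> V - W. \<exists>w\<in>W. E u w}"
  have "W \<noteq> {}" using small by auto
  then obtain w0 where w0: "w0 \<in> W" by blast
  have wit: "\<exists>z. H u z" if uU: "u \<in> U1" for u
  proof (rule ccontr)
    assume nw: "\<nexists>z. H u z"
    have u: "u \<in> V - W" "\<exists>w\<in>W. E u w" using uU U1_def by auto
    have nH: "E u z = (\<exists>w\<in>W. E z w)" if "z \<in> V - W" "z \<noteq> u" for z
      using nw that unfolding H_def by blast
    have "twins V E w0 u" unfolding twins_def nbhd_def
    proof (rule set_eqI, rule iffI)
      fix y assume "y \<in> {w \<in> V. E w0 w} - {u}"
      then have y: "y \<in> V" "y \<noteq> u" "E w0 y" by auto
      have "y \<noteq> w0" using y irr by blast
      have "E u y"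
      proof (cases "y \<in> W")
        case True then show ?thesis using unif u by blast
      next
        case False
        have "E y w0" using y esym by blast
        then show ?thesis using nH[of y] y False w0 by auto
      qed
      then show "y \<in> {w \<in> V. E u w} - {w0}" using y \<open>y \<noteq> w0\<close> by blast
    next
      fix y assume "y \<in> {w \<in> V. E u w} - {w0}"
      then have y: "y \<in> V" "y \<noteq> w0" "E u y" by auto
      have "y \<noteq> u" using y irr by blast
      have "E w0 y"
      proof (cases "y \<in> W")
        case True
        have "w0 \<noteq> y" using y by simp
        then show ?thesis using cl w0 True unfolding complete_on_def by blast
      next
        case False
        then have "\<exists>w\<in>W. E y w" using nH[of y] y \<open>y \<noteq> u\<close> by auto
        then have "E y w0" using unif y False w0 by blast
        then show ?thesis using esym by blast
      qed
      then show "y \<in> {w \<in> V. E w0 w} - {u}" using y \<open>y \<noteq> u\<close> by blast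
    qed
    then show False using no_twin u(1) w0 by blast
  qed
  define Dom where "Dom D \<longleftrightarrow> D \<subseteq> V - W \<and> (\<forall>u \<in> U1 - D. \<exists>z\<in>D. H u z)" for D
  have "Dom (V - W)" unfolding Dom_def U1_def by auto
  then obtain D where D: "Dom D" and Dmin: "\<forall>D'. Dom D' \<longrightarrow> card D \<le> card D'"
    using ex_has_least_nat[of Dom "V - W" card] by blast
  have finU: "finite (V - W)" using finV by simp
  have DU: "D \<subseteq> V - W" using D Dom_def by simp
  have finD: "finite D" using finite_subset[OF DU finU] .
  have D2: "Dom (V - W - D)"
    unfolding Dom_def
  proof (intro conjI ballI)
    show "V - W - D \<subseteq> V - W" by blast
    fix u assume u: "u \<in> U1 - (V - W - D)"
    then have uD: "u \<in> D" "u \<in> U1" using U1_def by auto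
    show "\<exists>z \<in> V - W - D. H u z"
    proof (rule ccontr)
      assume nz: "\<not> (\<exists>z \<in> V - W - D. H u z)"
      have "Dom (D - {u})" unfolding Dom_def
      proof (intro conjI ballI)
        show "D - {u} \<subseteq> V - W" using DU by auto
        fix v assume v: "v \<in> U1 - (D - {u})"
        show "\<exists>z\<in>D - {u}. H v z"
        proof (cases "v = u")
          case True
          obtain z where z: "H u z" using wit uD by blast
          then have "z \<in> D" "z \<noteq> u" using nz unfolding H_def by auto
          then show ?thesis using True z by blast
        next
          case False
          then have vD: "v \<in> U1 - D" using v by blast
          then obtain z where z: "z \<in> D" "H v z" using D unfolding Dom_def by blast
          have "z \<noteq> u"
          proof
            assume "z = u"
            then have "\<not> E v u" using z(2) uD unfolding H_def U1_def by auto
            then have "H u v" using vD False esym unfolding U1_def H_def by auto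
            moreover have "v \<in> V - W - D" using vD U1_def by auto
            ultimately show False using nz by blast
          qed
          then show ?thesis using z by blast
        qed
      qed
      then have "card D \<le> card (D - {u})" using Dmin by blast
      moreover have "card (D - {u}) < card D" by (rule card_Diff1_less[OF finD uD(1)])
      ultimately show False by simp
    qed
  qed
  have cs: "card (V - W - D) = card (V - W) - card D" using card_Diff_subset[OF finD DU] .
  have cD: "card D \<le> card (V - W)" using card_mono[OF finU DU] .
  obtain Z where Z: "Dom Z" "2 * card Z \<le> card (V - W)"
  proof (cases "2 * card D \<le> card (V - W)")
    case True then show ?thesis using that[OF D] by blast
  next
    case False
    then have "2 * card (V - W - D) \<le> card (V - W)" using cs cD by linarith
    then show ?thesis using that[OF D2] by blast
  qed
  have ZU: "Z \<subseteq> V - W" using Z Dom_def by simp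
  have "card (V - W - Z) \<le> card (V - W)" by (rule card_mono[OF finU]) blast
  then have sm: "card (V - W - Z) < card W" using small by linarith
  obtain f ws where f: "inj_on f (V - W - Z)" "f ` (V - W - Z) \<subseteq> W"
      and ws: "ws \<in> W" "ws \<notin> f ` (V - W - Z)"
    using inj_pick[OF _ sm] by blast
  let ?c = "clf (V - W - Z) f"
  have sep: "\<forall>u \<in> V - W - Z. \<exists>T \<in> ?c ` V. u \<notin> T \<and> f u \<notin> T
               \<and> ((\<exists>t\<in>T. E u t) \<noteq> (\<exists>t\<in>T. E (f u) t))"
  proof
    fix u assume u: "u \<in> V - W - Z"
    have fu: "f u \<in> W" using f u by blast
    show "\<exists>T \<in> ?c ` V. u \<notin> T \<and> f u \<notin> T \<and> ((\<exists>t\<in>T. E u t) \<noteq> (\<exists>t\<in>T. E (f u) t))"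
    proof (cases "\<exists>w\<in>W. E u w")
      case True
      then have "u \<in> U1 - Z" using u U1_def by auto
      then obtain z where z: "z \<in> Z" "H u z" using Z(1) unfolding Dom_def by blast
      have zV: "z \<in> V - W" "z \<noteq> u" "E u z \<noteq> (\<exists>w\<in>W. E z w)" using z(2) H_def by auto
      have "z \<notin> f ` (V - W - Z)" using f(2) zV by blast
      then have cz: "?c z = {z}" using z(1) unfolding clf_def by auto
      have m: "?c z \<in> ?c ` V" using zV by auto
      have "E (f u) z = (\<exists>w\<in>W. E z w)" using esym unif[OF zV(1) _ fu] fu by blast
      moreover have "f u \<noteq> z" using fu zV by auto
      ultimately have "u \<notin> ?c z \<and> f u \<notin> ?c z \<and> ((\<exists>t\<in>?c z. E u t) \<noteq> (\<exists>t\<in>?c z. E (f u) t))"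
        using cz zV by simp
      then show ?thesis using m by blast
    next
      case False
      have cws: "?c ws = {ws}" using ws unfolding clf_def by auto
      have m: "?c ws \<in> ?c ` V" using ws WV by auto
      have "\<not> E u ws" using False ws by blast
      moreover have "f u \<noteq> ws" using ws u by auto
      moreover have "E (f u) ws" using cl fu ws \<open>f u \<noteq> ws\<close> unfolding complete_on_def by blast
      moreover have "u \<noteq> ws" using u ws by auto
      ultimately have "u \<notin> ?c ws \<and> f u \<notin> ?c ws \<and> ((\<exists>t\<in>?c ws. E u t) \<noteq> (\<exists>t\<in>?c ws. E (f u) t))"
        using cws by simp
      then show ?thesis using m by blast
    qed
  qed
  have L: "locating_partition V E (?c ` V)" and C: "card (?c ` V) \<le> card Z + card W"
    using construct[OF ZU f sep] by blast+
  show ?thesis using L C Z(2) by (intro exI[of _ "?c ` V"]) linarith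
qed

end

theorem corollary19:
  fixes V :: "'a set" and E :: "'a \<Rightarrow> 'a \<Rightarrow> bool" and h :: int and W :: "'a set"
  assumes "connected_graph V E"
    and "card V \<ge> 2"
    and "\<not> complete_on E V"
    and "int (partition_dimension V E) = int (card V) - h"
    and "2 * twin_number V E > card V"
    and "tau_set V E W"
  shows "(int (card V) - 2 * h \<le> int (twin_number V E)
            \<and> int (twin_number V E) \<le> int (card V) - h - 1)
         \<longleftrightarrow> complete_on E W"
proof -
  interpret cg V E using assms(1) by unfold_locales
  have WV: "W \<subseteq> V" and Wtw: "\<forall>u\<in>W. \<forall>v\<in>W. twins V E u v" and cW: "card W = twin_number V E"
    using assms(6) unfolding tau_set_def by auto
  have Wmax: "\<forall>x\<in>V. card (twin_class V E x) \<le> card W"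
  proof
    fix x assume "x \<in> V"
    then show "card (twin_class V E x) \<le> card W" unfolding cW twin_number_def
      using finV by (intro Max_ge) auto
  qed
  interpret tw V E W by unfold_locales (use WV Wtw Wmax in auto)
  define n where "n = card V"
  define t where "t = card W"
  define b where "b = partition_dimension V E"
  have tn: "t \<le> n" unfolding t_def n_def using card_mono[OF finV WV] .
  have cU: "card (V - W) = n - t" unfolding t_def n_def using card_Diff_subset[OF finW WV] .
  have small: "card (V - W) < card W" using cU assms(5) cW unfolding t_def n_def by linarith
  have ble: "b \<le> card P" if "locating_partition V E P" for P
    unfolding b_def partition_dimension_def using that by (intro Least_le) blast
  have h: "int b = int n - h" using assms(4) unfolding b_def n_def .
  have tw: "twin_number V E = t" using cW t_def by simp
  show ?thesis
  proof (cases "complete_on E W")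
    case True
    obtain P1 where P1: "locating_partition V E P1" "2 * card P1 \<le> card (V - W) + 2 * card W"
      using upper_clique[OF True small] by blast
    have ek: "\<exists>k. \<exists>P. locating_partition V E P \<and> card P = k" using P1(1) by blast
    have bex: "\<exists>P. locating_partition V E P \<and> card P = b"
      unfolding b_def partition_dimension_def using LeastI_ex[OF ek] .
    then obtain P0 where P0: "locating_partition V E P0" "card P0 = b" by blast
    have "V - W \<noteq> {}"
    proof
      assume "V - W = {}"
      then have "V = W" using WV by blast
      then show False using True assms(3) by simp
    qed
    then obtain x where x: "x \<in> V - W" by blast
    have "W \<noteq> {}" using small by auto
    then obtain y where y: "y \<in> W" by blast
    obtain a c where ac: "a \<in> V - W" "c \<in> W" "E a c" using cross[OF WV x y] by blast
    have "card W < card P0" using lower(2)[OF P0(1) True ac] .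
    then have lb: "t < b" using P0 t_def by simp
    have ub: "2 * b \<le> n + t" using ble[OF P1(1)] P1(2) cU tn unfolding t_def by linarith
    show ?thesis using lb ub h True unfolding tw n_def by simp
  next
    case False
    then have ind: "\<forall>a\<in>W. \<forall>b\<in>W. \<not> E a b" using clique_or_indep by blast
    obtain P1 where P1: "locating_partition V E P1" "card P1 \<le> card W"
      using upper_indep[OF ind small] by blast
    have "b \<le> t" using ble[OF P1(1)] P1(2) t_def by simp
    then show ?thesis using h False unfolding tw n_def by simp
  qed
qed

end
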